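(* For every positive integer $n$, \[ Z^{+}(n)=\frac{1+(-1)^{n-1}}{2n}+\frac{(n-1)!}{2^{n}}\sum_{r=1}^{n}\frac{2^{r}}{r}, \] where $Z^{+}(n)=\sum_{k=0}^{n-1}\frac{(-1)^{k}+k!(n-k-1)!}{n}$. *)

theory Defs
  imports Complex_Main
begin

definition Zplus :: "nat \<Rightarrow> real" where
  "Zplus n = (\<Sum>k=0..n-1. ((-1)^k + fact k * fact (n-k-1)) / real n)"

end

theory Submission
  imports Defs
begin

definition TT :: "nat \<Rightarrow> real" where
  "TT j = (\<Sum>k=0..j. fact k * fact (j-k))"

lemma TT_rec: "2 * TT (Suc j) = (real j + 2) * TT j + 2 * fact (Suc j)"
proof -
  have e: "(real j + 2) * (fact k * fact (j-k)) = fact (Suc k) * fact (j-k) + fact k * fact (Suc j - k)"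
    if "k \<le> j" for k
  proof -
    have "Suc j - k = Suc (j-k)" using that by simp
    hence c: "fact (Suc j - k) = (real j - real k + 1) * (fact (j-k)::real)"
      using that by (simp add: of_nat_diff)
    have s: "fact (Suc k) = (real k + 1) * (fact k::real)" by simp
    show ?thesis unfolding c s by (simp add: algebra_simps)
  qed
  have "(real j + 2) * TT j = (\<Sum>k=0..j. fact (Suc k) * fact (Suc j - Suc k)) + (\<Sum>k=0..j. fact k * fact (Suc j - k))"
    unfolding TT_def sum_distrib_left sum.distrib[symmetric] by (rule sum.cong) (auto simp: e)
  also have "(\<Sum>k=0..j. fact (Suc k) * fact (Suc j - Suc k)) = TT (Suc j) - fact (Suc j)"
    unfolding TT_def by (subst sum.atLeast0_atMost_Suc_shift) simp
  also have "(\<Sum>k=0..j. fact k * fact (Suc j - k)) = TT (Suc j) - fact (Suc j)"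
    unfolding TT_def by (simp add: sum.atLeast0_atMost_Suc)
  finally show ?thesis by simp
qed

lemma TT_closed: "TT j = fact (Suc j) / 2^(Suc j) * (\<Sum>r=1..Suc j. 2^r / real r)"
proof (induction j)
  case 0
  then show ?case by (simp add: TT_def)
next
  case (Suc j)
  have "TT (Suc j) = ((real j + 2) * TT j + 2 * fact (Suc j)) / 2" using TT_rec[of j] by simp
  also have "\<dots> = fact (Suc (Suc j)) / 2^(Suc (Suc j)) * (\<Sum>r=1..Suc j. 2^r / real r)
      + fact (Suc (Suc j)) / 2^(Suc (Suc j)) * (2^(Suc (Suc j)) / real (Suc (Suc j)))"
  proof -
    have f: "fact (Suc (Suc j)) = (real j + 2) * (fact (Suc j)::real)" by simp
    have p: "(2::real)^(Suc (Suc j)) = 2 * 2^(Suc j)" by simp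
    have r: "real (Suc (Suc j)) = real j + 2" by simp
    have g: "((x + 2) * (F / P * H) + 2 * F) / 2 = (x + 2) * F / (2 * P) * H + (x + 2) * F / (2 * P) * (2 * P / (x + 2))"
      if "x \<ge> 0" "P > 0" for x F P H :: real
    proof -
      have "x + 2 \<noteq> 0" "P \<noteq> 0" using that by auto
      hence "(x + 2) * F / (2 * P) * (2 * P / (x + 2)) = F" by simp
      thus ?thesis using that by (simp add: field_simps)
    qed
    show ?thesis unfolding Suc f p r by (rule g) auto
  qed
  also have "\<dots> = fact (Suc (Suc j)) / 2^(Suc (Suc j)) * (\<Sum>r=1..Suc (Suc j). 2^r / real r)"
  proof -
    have "(\<Sum>r=1..Suc (Suc j). 2^r / real r) = (\<Sum>r=1..Suc j. 2^r / real r) + 2^(Suc (Suc j)) / real (Suc (Suc j))"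
      by simp
    thus ?thesis by (simp only: distrib_left)
  qed
  finally show ?case .
qed

lemma alt_sum: "(\<Sum>k=0..j. (-1::real)^k) = (1 + (-1)^j) / 2"
  by (induction j) auto

theorem mainTheorem5:
  fixes n :: nat
  assumes "n \<ge> 1"
  shows "Zplus n = (1 + (-1)^(n-1)) / (2 * real n)
           + fact (n-1) / 2^n * (\<Sum>r=1..n. 2^r / real r)"
proof -
  obtain j where n: "n = Suc j" using assms by (cases n) auto
  have "Zplus n = ((\<Sum>k=0..j. (-1::real)^k) + TT j) / real n"
    unfolding Zplus_def TT_def n sum_divide_distrib[symmetric] sum.distrib by simp
  also have "\<dots> = (1 + (-1)^(n-1)) / (2 * real n) + fact (n-1) / 2^n * (\<Sum>r=1..n. 2^r / real r)"
    unfolding alt_sum TT_closed n by (simp add: field_simps)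
  finally show ?thesis .
qed

end
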